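(* Let $(\mathcal{A},\varphi)$ be a non-commutative probability space (a unital $*$-algebra with a state $\varphi$) and let $(\mathcal{A}_{1,\ell},\mathcal{A}_{1,r})$ and $(\mathcal{A}_{2,\ell},\mathcal{A}_{2,r})$ be pairs of $*$-subalgebras of $\mathcal{A}$ which are bi-monotonically independent (in the order $1<2$) with respect to $\varphi$. If $\varphi|_{\mathcal{A}_{1,\ell}}\ne0$, then $\varphi(ab)=\varphi(ba)=\varphi(a)\varphi(b)$ for all $a\in\mathcal{A}_{2,\ell}$ and $b\in\mathcal{A}_{2,r}$. Consequently the bi-monotonic product of states is not a state in general.
   Context: For algebras $\mathcal{C}_k$, $\sqcup_k\mathcal{C}_k$ denotes the free product without identification of units, $*_k\mathcal{C}_k$ the free product of unital algebras with identification of units, and $\widetilde{\mathcal{C}}=\mathbb{C}1\oplus\mathcal{C}$ the unitization; $\widetilde{\mathcal{C}_1}*\widetilde{\mathcal{C}_2}\cong\widetilde{\mathcal{C}_1\sqcup\mathcal{C}_2}$. Notation. For $n\ge1$ and $\chi:\{1,\dots,n\}\to\{\ell,r\}$ with $\chi^{-1}(\{\ell\})=\{i_1<\dots<i_p\}$ and $\chi^{-1}(\{r\})=\{i_{p+1}>\dots>i_n\}$, let $\prec_\chi$ be the total order $i_1\prec_\chi\cdots\prec_\chi i_n$. A $\chi$-interval is an interval for $\prec_\chi$. For $V=\{v_1<\dots<v_s\}$ write $b_V=b_{v_1}\cdots b_{v_s}$. For $\omega:\{1,\dots,n\}\to K$, $\pi_{\chi,\omega}$ is the unique partition of $\{1,\dots,n\}$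 into blocks $V_1,\dots,V_m$ such that each $V_k$ is a $\chi$-interval, $\max_{\prec_\chi}V_k\prec_\chi\min_{\prec_\chi}V_{k+1}$, $\omega$ is constant on each $V_k$, and $\omega(V_k)\ne\omega(V_{k+1})$. c-bi-free product. Given pairs of unital algebras $(\mathcal{B}_{k,\ell},\mathcal{B}_{k,r})_{k\in K}$ and unital linear functionals $\varphi_k,\psi_k$ on $\mathcal{B}_{k,\ell}*\mathcal{B}_{k,r}$, their c-bi-free product $(\varphi,\psi)$ is the unique pair of unital linear functionals on $*_k(\mathcal{B}_{k,\ell}*\mathcal{B}_{k,r})$ restricting to $\varphi_k,\psi_k$ and such that whenever $b_j\in\mathcal{B}_{\omega(j),\chi(j)}$ with $\psi(b_V)=0$ for all $V\in\pi_{\chi,\omega}$, then $\psi(b_1\cdots b_n)=0$ and $\varphi(b_1\cdots b_n)=\prod_{V\in\pi_{\chi,\omega}}\varphi(b_V)$. Bi-monotonic product. For pairs $(\mathcal{A}_{k,\ell},\mathcal{A}_{k,r})$, $k=1,2$, with linear functionals $\varphi_k$ on $\mathcal{A}_{k,\ell}\sqcup\mathcal{A}_{k,r}$: let $\widetilde{\varphi_k}$ be the unital extension to $\widetilde{\mathcal{A}_{k,\ell}\sqcup\mathcal{A}_{k,r}}$, $\delta_1$ the unital functional on $\widetilde{\mathcal{A}_{1,\ell}\sqcup\mathcal{A}_{1,r}}$ vanishing on $\mathcal{A}_{1,\ell}\sqcup\mathcal{A}_{1,r}$, and $(\widetilde\varphi,\widetilde\psi)$ the c-bi-free product of $(\widetilde{\varphi_1},\delta_1)$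 and $(\widetilde{\varphi_2},\widetilde{\varphi_2})$ for the pairs $(\widetilde{\mathcal{A}_{k,\ell}},\widetilde{\mathcal{A}_{k,r}})$. Then $\varphi_1\rhd\!\!\rhd\varphi_2$ is the restriction of $\widetilde\varphi$ to $(\mathcal{A}_{1,\ell}\sqcup\mathcal{A}_{1,r})\sqcup(\mathcal{A}_{2,\ell}\sqcup\mathcal{A}_{2,r})$. Bi-monotonic independence of two pairs of subalgebras of $(\mathcal{A},\varphi)$ (in the order $1<2$) means $\varphi\circ\iota=\varphi_1\rhd\!\!\rhd\varphi_2$, where $\iota:(\mathcal{A}_{1,\ell}\sqcup\mathcal{A}_{1,r})\sqcup(\mathcal{A}_{2,\ell}\sqcup\mathcal{A}_{2,r})\to\mathcal{A}$ is induced by the inclusions and $\varphi_k=\varphi\circ\iota|_{\mathcal{A}_{k,\ell}\sqcup\mathcal{A}_{k,r}}$. *)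

theory Defs
  imports Complex_Main
begin

definition star_algebra :: "(complex \<Rightarrow> 'a::ring_1 \<Rightarrow> 'a) \<Rightarrow> ('a \<Rightarrow> 'a) \<Rightarrow> bool" where
  "star_algebra sc st \<longleftrightarrow>
     (\<forall>a x y. sc a (x + y) = sc a x + sc a y) \<and>
     (\<forall>a b x. sc (a + b) x = sc a x + sc b x) \<and>
     (\<forall>a b x. sc a (sc b x) = sc (a * b) x) \<and>
     (\<forall>x. sc 1 x = x) \<and>
     (\<forall>a x y. sc a (x * y) = sc a x * y \<and> sc a (x * y) = x * sc a y) \<and>
     (\<forall>x y. st (x + y) = st x + st y) \<and>
     (\<forall>a x. st (sc a x) = sc (cnj a) (st x)) \<and>
     (\<forall>x y. st (x * y) = st y * st x) \<and>
     (\<forall>x. st (st x) = x)"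

definition is_state :: "(complex \<Rightarrow> 'a::ring_1 \<Rightarrow> 'a) \<Rightarrow> ('a \<Rightarrow> 'a) \<Rightarrow> ('a \<Rightarrow> complex) \<Rightarrow> bool" where
  "is_state sc st \<phi> \<longleftrightarrow>
     (\<forall>x y. \<phi> (x + y) = \<phi> x + \<phi> y) \<and>
     (\<forall>a x. \<phi> (sc a x) = a * \<phi> x) \<and>
     \<phi> 1 = 1 \<and>
     (\<forall>x. Im (\<phi> (st x * x)) = 0 \<and> Re (\<phi> (st x * x)) \<ge> 0)"

text \<open>(Not necessarily unital) *-subalgebra.\<close>
definition star_subalgebra :: "(complex \<Rightarrow> 'a::ring_1 \<Rightarrow> 'a) \<Rightarrow> ('a \<Rightarrow> 'a) \<Rightarrow> 'a set \<Rightarrow> bool" where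
  "star_subalgebra sc st S \<longleftrightarrow>
     0 \<in> S \<and>
     (\<forall>x\<in>S. \<forall>y\<in>S. x + y \<in> S \<and> x * y \<in> S) \<and>
     (\<forall>a. \<forall>x\<in>S. sc a x \<in> S) \<and>
     (\<forall>x\<in>S. st x \<in> S)"

datatype side = Lft | Rgt

text \<open>A letter (k, s, c, x) stands for the element c 1 + x of the unitization of the
algebra A k s, where k \<in> {1,2} and s is the side (left/right).  A linear functional on the
unital free product *_(k,s) (unitization of A k s) is the same thing as a function F on words
(lists of letters) that is linear in each letter, compatible with multiplication of adjacent
letters from the same algebra, and under which unit letters may be deleted.\<close>

type_synonym 'a letter = "nat \<times> side \<times> complex \<times> 'a"

definition valid_letter :: "(nat \<Rightarrow> side \<Rightarrow> 'a set) \<Rightarrow> 'a letter \<Rightarrow> bool" where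
  "valid_letter A l \<longleftrightarrow> (case l of (k, s, c, x) \<Rightarrow> k \<in> {1, 2} \<and> x \<in> A k s)"

definition valid_word :: "(nat \<Rightarrow> side \<Rightarrow> 'a set) \<Rightarrow> 'a letter list \<Rightarrow> bool" where
  "valid_word A w \<longleftrightarrow> (\<forall>l\<in>set w. valid_letter A l)"

definition pure_word :: "'a letter list \<Rightarrow> bool" where
  "pure_word w \<longleftrightarrow> (\<forall>l\<in>set w. fst (snd (snd l)) = 0)"

definition word_prod :: "'a::ring_1 letter list \<Rightarrow> 'a" where
  "word_prod w = prod_list (map (\<lambda>l. snd (snd (snd l))) w)"

definition free_prod_functional ::
  "(complex \<Rightarrow> 'a::ring_1 \<Rightarrow> 'a) \<Rightarrow> (nat \<Rightarrow> side \<Rightarrow> 'a set) \<Rightarrow> ('a letter list \<Rightarrow> complex) \<Rightarrow> bool" where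
  "free_prod_functional sc A F \<longleftrightarrow>
     (\<forall>u v k s c1 x1 c2 x2 d.
        valid_word A u \<and> valid_word A v \<and> valid_letter A (k, s, c1, x1) \<and> valid_letter A (k, s, c2, x2) \<longrightarrow>
        F (u @ [(k, s, c1 + d * c2, x1 + sc d x2)] @ v)
          = F (u @ [(k, s, c1, x1)] @ v) + d * F (u @ [(k, s, c2, x2)] @ v)) \<and>
     (\<forall>u v k s c x d y.
        valid_word A u \<and> valid_word A v \<and> valid_letter A (k, s, c, x) \<and> valid_letter A (k, s, d, y) \<longrightarrow>
        F (u @ [(k, s, c, x), (k, s, d, y)] @ v)
          = F (u @ [(k, s, c * d, sc c y + sc d x + x * y)] @ v)) \<and>
     (\<forall>u v k s.
        valid_word A u \<and> valid_word A v \<and> k \<in> {1, 2} \<longrightarrow>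
        F (u @ [(k, s, 1, 0)] @ v) = F (u @ v))"

text \<open>Positions of a word of length n are 0,...,n-1. chi_order w lists the positions in the
order \<prec>_\<chi>: left positions increasingly, then right positions decreasingly.\<close>

definition chi_order :: "'a letter list \<Rightarrow> nat list" where
  "chi_order w = [i \<leftarrow> [0..<length w]. fst (snd (w ! i)) = Lft]
                 @ rev [i \<leftarrow> [0..<length w]. fst (snd (w ! i)) = Rgt]"

text \<open>\<pi>_{\<chi>,\<omega>}: the maximal \<chi>-intervals on which \<omega> (the algebra index k) is constant.\<close>
definition pi_chi_omega :: "'a letter list \<Rightarrow> nat set set" where
  "pi_chi_omega w =
     (let n = length w; ord = chi_order w; om = (\<lambda>t. fst (w ! (ord ! t))) in
      {V. \<exists>a b. a \<le> b \<and> b < n \<and> V = (\<lambda>t. ord ! t) ` {a..b} \<and>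
              (\<forall>t\<in>{a..b}. om t = om a) \<and>
              (a = 0 \<or> om (a - 1) \<noteq> om a) \<and>
              (b = n - 1 \<or> om (b + 1) \<noteq> om a)})"

text \<open>The c-bi-free product (\<Phi>,\<Psi>) of (\<phi>_1~, \<delta>_1) and (\<phi>_2~, \<phi>_2~), where \<phi>_k is the
restriction of \<phi> \<circ> \<iota> to the free product of A k Lft and A k Rgt and ~ denotes unital
extension to the unitization.  Restrictions are stated on pure words (which, together with
linearity and unit deletion, determine the functionals on the unitized free products).\<close>

definition bimonotone_cbifree_pair ::
  "(complex \<Rightarrow> 'a::ring_1 \<Rightarrow> 'a) \<Rightarrow> ('a \<Rightarrow> complex) \<Rightarrow> (nat \<Rightarrow> side \<Rightarrow> 'a set)
   \<Rightarrow> ('a letter list \<Rightarrow> complex) \<Rightarrow> ('a letter list \<Rightarrow> complex) \<Rightarrow> bool" where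
  "bimonotone_cbifree_pair sc \<phi> A \<Phi> \<Psi> \<longleftrightarrow>
     free_prod_functional sc A \<Phi> \<and> free_prod_functional sc A \<Psi> \<and>
     \<Phi> [] = 1 \<and> \<Psi> [] = 1 \<and>
     \<comment> \<open>restriction of \<Phi> to the k-th unitized pair is \<phi>_k~\<close>
     (\<forall>k\<in>{1, 2}. \<forall>w. valid_word A w \<and> pure_word w \<and> w \<noteq> [] \<and> (\<forall>l\<in>set w. fst l = k)
         \<longrightarrow> \<Phi> w = \<phi> (word_prod w)) \<and>
     \<comment> \<open>restriction of \<Psi> to the first unitized pair is \<delta>_1\<close>
     (\<forall>w. valid_word A w \<and> pure_word w \<and> w \<noteq> [] \<and> (\<forall>l\<in>set w. fst l = 1)
         \<longrightarrow> \<Psi> w = 0) \<and>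
     \<comment> \<open>restriction of \<Psi> to the second unitized pair is \<phi>_2~\<close>
     (\<forall>w. valid_word A w \<and> pure_word w \<and> w \<noteq> [] \<and> (\<forall>l\<in>set w. fst l = 2)
         \<longrightarrow> \<Psi> w = \<phi> (word_prod w)) \<and>
     \<comment> \<open>c-bi-free condition\<close>
     (\<forall>w. valid_word A w \<and> w \<noteq> [] \<and> (\<forall>V\<in>pi_chi_omega w. \<Psi> (nths w V) = 0)
         \<longrightarrow> \<Psi> w = 0 \<and> \<Phi> w = (\<Prod>V\<in>pi_chi_omega w. \<Phi> (nths w V)))"

text \<open>Bi-monotonic independence of (A 1 Lft, A 1 Rgt) and (A 2 Lft, A 2 Rgt) (order 1 < 2):
\<phi> \<circ> \<iota> equals the bi-monotonic product, i.e. the restriction of \<Phi> to the non-unital free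
product, which is spanned by the pure words.\<close>

definition bimonotone_independent ::
  "(complex \<Rightarrow> 'a::ring_1 \<Rightarrow> 'a) \<Rightarrow> ('a \<Rightarrow> complex) \<Rightarrow> (nat \<Rightarrow> side \<Rightarrow> 'a set) \<Rightarrow> bool" where
  "bimonotone_independent sc \<phi> A \<longleftrightarrow>
     (\<exists>\<Phi> \<Psi>. bimonotone_cbifree_pair sc \<phi> A \<Phi> \<Psi> \<and>
        (\<forall>w. valid_word A w \<and> pure_word w \<and> w \<noteq> [] \<longrightarrow> \<phi> (word_prod w) = \<Phi> w))"

end

theory Submission imports Defs begin

lemma pi_alt:
  assumes "\<forall>t\<in>{..<length w - 1}. fst (w ! (chi_order w ! t)) \<noteq> fst (w ! (chi_order w ! Suc t))"
  shows "pi_chi_omega w = (\<lambda>t. {chi_order w ! t}) ` {..<length w}"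
proof -
  let ?n = "length w"
  let ?o = "chi_order w"
  let ?om = "\<lambda>t. fst (w ! (?o ! t))"
  have as: "\<And>t. Suc t < ?n \<Longrightarrow> ?om t \<noteq> ?om (Suc t)" using assms by auto
  show ?thesis
  proof (rule set_eqI, rule iffI)
    fix V assume "V \<in> pi_chi_omega w"
    then obtain a b where ab: "a \<le> b" "b < ?n" "V = (\<lambda>t. ?o ! t) ` {a..b}"
      "\<forall>t\<in>{a..b}. ?om t = ?om a"
      unfolding pi_chi_omega_def Let_def by blast
    have "a = b"
    proof (rule ccontr)
      assume "a \<noteq> b"
      then have "Suc a \<in> {a..b}" using ab by auto
      then have "?om (Suc a) = ?om a" using ab by blast
      moreover have "Suc a < ?n" using ab \<open>a \<noteq> b\<close> by auto
      ultimately show False using as by metis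
    qed
    then show "V \<in> (\<lambda>t. {?o ! t}) ` {..<?n}" using ab by auto
  next
    fix V assume "V \<in> (\<lambda>t. {?o ! t}) ` {..<?n}"
    then obtain t where t: "t < ?n" "V = {?o ! t}" by auto
    have c1: "t = 0 \<or> ?om (t - 1) \<noteq> ?om t"
    proof (cases t)
      case (Suc s) then show ?thesis using as[of s] t by auto
    qed simp
    have c2: "t = ?n - 1 \<or> ?om (t + 1) \<noteq> ?om t"
    proof (cases "t = ?n - 1")
      case False then have "Suc t < ?n" using t by auto
      then show ?thesis using as[of t] by auto
    qed simp
    show "V \<in> pi_chi_omega w"
      unfolding pi_chi_omega_def Let_def
      using t c1 c2 by (auto intro!: exI[of _ t])
  qed
qed

lemma pi3b:
  fixes p q r :: "'a letter"
  assumes "fst p \<noteq> fst q" "fst q = fst r" "fst (snd p) = Lft" "fst (snd q) = Lft" "fst (snd r) = Rgt"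
  shows "pi_chi_omega [p,q,r] = {{0},{1,2}}"
proof -
  have co: "chi_order [p,q,r] = [0,1,2]" using assms by (simp add: chi_order_def upt_rec)
  define om where "om = (\<lambda>t. fst ([p,q,r] ! ([0,1,2::nat] ! t)))"
  have om0: "om 0 = fst p" and om1: "om 1 = fst q" and om2: "om 2 = fst r"
    by (simp_all add: om_def)
  have P: "pi_chi_omega [p,q,r] = {V. \<exists>a b. a \<le> b \<and> b < 3 \<and> V = (\<lambda>t. [0,1,2::nat] ! t) ` {a..b} \<and>
              (\<forall>t\<in>{a..b}. om t = om a) \<and>
              (a = 0 \<or> om (a - 1) \<noteq> om a) \<and>
              (b = 3 - 1 \<or> om (b + 1) \<noteq> om a)}"
  proof -
    have len: "length [p,q,r] = 3" by simp
    show ?thesis unfolding pi_chi_omega_def Let_def co om_def len by (rule refl)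
  qed
  have i00: "(\<lambda>t. [0,1,2::nat] ! t) ` {0..0} = {0}" by simp
  have i12: "(\<lambda>t. [0,1,2::nat] ! t) ` {1..2} = {1,2}"
  proof -
    have "{1..2::nat} = {1,2}" by auto
    then show ?thesis by simp
  qed
  show ?thesis
  proof (rule set_eqI, rule iffI)
    fix V assume "V \<in> pi_chi_omega [p,q,r]"
    then obtain a b where ab: "a \<le> b" "b < 3" "V = (\<lambda>t. [0,1,2::nat] ! t) ` {a..b}"
      "\<forall>t\<in>{a..b}. om t = om a" "a = 0 \<or> om (a - 1) \<noteq> om a" "b = 3 - 1 \<or> om (b + 1) \<noteq> om a"
    proof -
      from \<open>V \<in> pi_chi_omega [p,q,r]\<close> have "V \<in> {V. \<exists>a b. a \<le> b \<and> b < 3 \<and> V = (\<lambda>t. [0,1,2::nat] ! t) ` {a..b} \<and>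
              (\<forall>t\<in>{a..b}. om t = om a) \<and>
              (a = 0 \<or> om (a - 1) \<noteq> om a) \<and>
              (b = 3 - 1 \<or> om (b + 1) \<noteq> om a)}" by (simp only: P)
      then have "\<exists>a b. a \<le> b \<and> b < 3 \<and> V = (\<lambda>t. [0,1,2::nat] ! t) ` {a..b} \<and>
              (\<forall>t\<in>{a..b}. om t = om a) \<and>
              (a = 0 \<or> om (a - 1) \<noteq> om a) \<and>
              (b = 3 - 1 \<or> om (b + 1) \<noteq> om a)" by (rule CollectD)
      then obtain a b where h: "a \<le> b \<and> b < 3 \<and> V = (\<lambda>t. [0,1,2::nat] ! t) ` {a..b} \<and>
              (\<forall>t\<in>{a..b}. om t = om a) \<and>
              (a = 0 \<or> om (a - 1) \<noteq> om a) \<and>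
              (b = 3 - 1 \<or> om (b + 1) \<noteq> om a)" by blast
      show ?thesis apply (rule that[of a b]) by (insert h, elim conjE, assumption)+
    qed
    have b3: "b = 0 \<or> b = 1 \<or> b = 2" using ab(2) by linarith
    have "a = 0 \<and> b = 0 \<or> a = 1 \<and> b = 2"
    proof -
      have a3: "a = 0 \<or> a = 1 \<or> a = 2" using ab(1,2) by linarith
      have x1: "\<not> (a = 0 \<and> b \<ge> 1)"
      proof
        assume h: "a = 0 \<and> b \<ge> 1"
        then have "1 \<in> {a..b}" by simp
        then have "om 1 = om a" using ab(4) by (rule bspec[rotated])
        then have "om 1 = om 0" using h by simp
        then show False using om0 om1 assms(1) by simp
      qed
      have x2: "\<not> (a = 1 \<and> b = 1)"
      proof
        assume h: "a = 1 \<and> b = 1"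
        then have "om 2 \<noteq> om 1" using ab(6) h by (simp add: numeral_2_eq_2)
        then show False using om2 om1 assms(2) by simp
      qed
      have x3: "a \<noteq> 2"
      proof
        assume h: "a = 2"
        then have "om 1 \<noteq> om 2" using ab(5) h by (simp add: numeral_2_eq_2)
        then show False using om2 om1 assms(2) by simp
      qed
      show ?thesis using a3 b3 x1 x2 x3 ab(1) by auto
    qed
    then show "V \<in> {{0},{1,2}}" using ab(3) i00 i12 by auto
  next
    fix V assume "V \<in> {{0::nat},{1,2}}"
    then have "V = {0} \<or> V = {1,2}" by blast
    then show "V \<in> pi_chi_omega [p,q,r]"
    proof
      assume V: "V = {0}"
      have "0 \<le> (0::nat) \<and> (0::nat) < 3 \<and> V = (\<lambda>t. [0,1,2::nat] ! t) ` {0..0} \<and>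
              (\<forall>t\<in>{0..0}. om t = om 0) \<and>
              (0 = (0::nat) \<or> om (0 - 1) \<noteq> om 0) \<and>
              (0 = (3::nat) - 1 \<or> om (0 + 1) \<noteq> om 0)" using V i00 om0 om1 assms(1) by simp
      then show ?thesis unfolding P by blast
    next
      assume V: "V = {1,2}"
      have "1 \<le> (2::nat) \<and> (2::nat) < 3 \<and> V = (\<lambda>t. [0,1,2::nat] ! t) ` {1..2} \<and>
              (\<forall>t\<in>{1..2}. om t = om 1) \<and>
              (1 = (0::nat) \<or> om (1 - 1) \<noteq> om 1) \<and>
              (2 = (3::nat) - 1 \<or> om (2 + 1) \<noteq> om 1)"
      proof -
        have "{1..2::nat} = {1,2}" by auto
        then show ?thesis using V i12 om0 om1 om2 assms(1,2) by simp
      qed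
      then show ?thesis unfolding P by blast
    qed
  qed
qed

lemma pi_alt3:
  assumes co: "chi_order w = [i,j,k]" and l: "length w = 3"
    and d1: "fst (w!i) \<noteq> fst (w!j)" and d2: "fst (w!j) \<noteq> fst (w!k)"
  shows "pi_chi_omega w = {{i},{j},{k}}"
proof -
  have l2: "{..<(2::nat)} = {0,1}" by auto
  have l3: "{..<(3::nat)} = {0,1,2}" by auto
  have h: "\<forall>t\<in>{..<length w - 1}. fst (w ! (chi_order w ! t)) \<noteq> fst (w ! (chi_order w ! Suc t))"
    using d1 d2 unfolding co l by (simp add: l2)
  show ?thesis unfolding pi_alt[OF h] l co l3 by auto
qed

lemma pi_alt2:
  assumes co: "chi_order w = [i,j]" and l: "length w = 2"
    and d1: "fst (w!i) \<noteq> fst (w!j)"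
  shows "pi_chi_omega w = {{i},{j}}"
proof -
  have l2: "{..<(2::nat)} = {0,1}" by auto
  have h: "\<forall>t\<in>{..<length w - 1}. fst (w ! (chi_order w ! t)) \<noteq> fst (w ! (chi_order w ! Suc t))"
    using d1 unfolding co l by simp
  show ?thesis unfolding pi_alt[OF h] l co l2 by auto
qed

lemma fp_split:
  assumes fp: "free_prod_functional sc A F" and sc0: "\<And>c. sc c 0 = 0"
    and z: "0 \<in> A k s" and y: "y \<in> A k s" and k: "k \<in> {1,2}"
    and u: "valid_word A u" and v: "valid_word A v"
  shows "F (u @ (k,s,c,y) # v) = F (u @ (k,s,0,y) # v) + c * F (u @ v)"
proof -
  note lin = fp[unfolded free_prod_functional_def, THEN conjunct1]
  note un = fp[unfolded free_prod_functional_def, THEN conjunct2, THEN conjunct2]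
  have L: "F (u @ [(k, s, 0 + c * 1, y + sc c 0)] @ v)
          = F (u @ [(k, s, 0, y)] @ v) + c * F (u @ [(k, s, 1, 0)] @ v)"
    apply (rule lin[rule_format])
    using u v y z k by (simp add: valid_letter_def)
  have U: "F (u @ [(k, s, 1, 0)] @ v) = F (u @ v)"
    apply (rule un[rule_format])
    using u v k by simp
  have e: "y + sc c 0 = y" using sc0 by simp
  show ?thesis using L U unfolding e by simp
qed

lemma key:
  assumes pair: "bimonotone_cbifree_pair sc \<phi> A \<Phi> \<Psi>"
    and restr: "\<forall>w. valid_word A w \<and> pure_word w \<and> w \<noteq> [] \<longrightarrow> \<phi> (word_prod w) = \<Phi> w"
    and sc0: "\<And>c. sc c 0 = 0"
    and zz: "\<forall>k\<in>{1,2}. \<forall>s. 0 \<in> A k s"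
    and a: "a \<in> A 2 Lft" and b: "b \<in> A 2 Rgt" and x: "x \<in> A 1 Lft"
  shows "\<phi> (b * (a * x)) = \<phi> b * \<phi> a * \<phi> x \<and> \<phi> (x * (a * b)) = \<phi> x * \<phi> (a * b)"
proof -
  have z: "\<And>k s. k \<in> {1,2} \<Longrightarrow> 0 \<in> A k s" using zz by blast
  note P = pair[unfolded bimonotone_cbifree_pair_def]
  have fpF: "free_prod_functional sc A \<Phi>" using P[THEN conjunct1] .
  have fpS: "free_prod_functional sc A \<Psi>" using P[THEN conjunct2, THEN conjunct1] .
  have F0: "\<Phi> [] = 1" using P[THEN conjunct2, THEN conjunct2, THEN conjunct1] .
  have S0: "\<Psi> [] = 1" using P[THEN conjunct2, THEN conjunct2, THEN conjunct2, THEN conjunct1] .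
  note S1a = P[THEN conjunct2, THEN conjunct2, THEN conjunct2, THEN conjunct2, THEN conjunct2, THEN conjunct1]
  note S2a = P[THEN conjunct2, THEN conjunct2, THEN conjunct2, THEN conjunct2, THEN conjunct2, THEN conjunct2, THEN conjunct1]
  note conda = P[THEN conjunct2, THEN conjunct2, THEN conjunct2, THEN conjunct2, THEN conjunct2, THEN conjunct2, THEN conjunct2]
  have R: "\<And>w. valid_word A w \<Longrightarrow> pure_word w \<Longrightarrow> w \<noteq> [] \<Longrightarrow> \<Phi> w = \<phi> (word_prod w)"
    using restr by auto
  have S1: "\<And>w. valid_word A w \<Longrightarrow> pure_word w \<Longrightarrow> w \<noteq> [] \<Longrightarrow> (\<forall>l\<in>set w. fst l = 1) \<Longrightarrow> \<Psi> w = 0"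
    using S1a by blast
  have S2: "\<And>w. valid_word A w \<Longrightarrow> pure_word w \<Longrightarrow> w \<noteq> [] \<Longrightarrow> (\<forall>l\<in>set w. fst l = 2) \<Longrightarrow> \<Psi> w = \<phi> (word_prod w)"
    using S2a by blast
  have cond: "\<And>w. valid_word A w \<Longrightarrow> w \<noteq> [] \<Longrightarrow> (\<forall>V\<in>pi_chi_omega w. \<Psi> (nths w V) = 0)
         \<Longrightarrow> \<Phi> w = (\<Prod>V\<in>pi_chi_omega w. \<Phi> (nths w V))"
    using conda by blast
  have splitF: "\<And>k s y c u v. k\<in>{1,2} \<Longrightarrow> y \<in> A k s \<Longrightarrow> valid_word A u \<Longrightarrow> valid_word A v \<Longrightarrow>
     \<Phi> (u @ (k,s,c,y) # v) = \<Phi> (u @ (k,s,0,y) # v) + c * \<Phi> (u @ v)"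
    using fp_split[OF fpF sc0] z by blast
  have splitS: "\<And>k s y c u v. k\<in>{1,2} \<Longrightarrow> y \<in> A k s \<Longrightarrow> valid_word A u \<Longrightarrow> valid_word A v \<Longrightarrow>
     \<Psi> (u @ (k,s,c,y) # v) = \<Psi> (u @ (k,s,0,y) # v) + c * \<Psi> (u @ v)"
    using fp_split[OF fpS sc0] z by blast
  have vl: "\<And>k s c y. valid_letter A (k,s,c,y) \<longleftrightarrow> k \<in> {1,2} \<and> y \<in> A k s"
    by (simp add: valid_letter_def)
  have x': "x \<in> A (Suc 0) Lft" using x by simp
  note VW = valid_word_def vl a b x x' pure_word_def word_prod_def

  define Xl where "Xl = (1::nat, Lft, 0::complex, x)"
  define Al where "Al = (2::nat, Lft, 0::complex, a)"
  define Bl where "Bl = (2::nat, Rgt, 0::complex, b)"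
  define Ac where "Ac = (2::nat, Lft, - \<phi> a, a)"
  define Bc where "Bc = (2::nat, Rgt, - \<phi> b, b)"
  note LD = Xl_def Al_def Bl_def Ac_def Bc_def

  have FX: "\<Phi> [Xl] = \<phi> x" using R[of "[Xl]"] by (simp add: VW LD)
  have FA: "\<Phi> [Al] = \<phi> a" using R[of "[Al]"] by (simp add: VW LD)
  have FB: "\<Phi> [Bl] = \<phi> b" using R[of "[Bl]"] by (simp add: VW LD)
  have SX: "\<Psi> [Xl] = 0" using S1[of "[Xl]"] by (simp add: VW LD)
  have SA: "\<Psi> [Al] = \<phi> a" using S2[of "[Al]"] by (simp add: VW LD)
  have SB: "\<Psi> [Bl] = \<phi> b" using S2[of "[Bl]"] by (simp add: VW LD)
  have FAc: "\<Phi> [Ac] = 0" using splitF[where k=2 and y=a and s=Lft and c="- \<phi> a" and u="[]" and v="[]"] FA F0 by (simp add: VW LD)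
  have FBc: "\<Phi> [Bc] = 0" using splitF[where k=2 and y=b and s=Rgt and c="- \<phi> b" and u="[]" and v="[]"] FB F0 by (simp add: VW LD)
  have SAc: "\<Psi> [Ac] = 0" using splitS[where k=2 and y=a and s=Lft and c="- \<phi> a" and u="[]" and v="[]"] SA S0 by (simp add: VW LD)
  have SBc: "\<Psi> [Bc] = 0" using splitS[where k=2 and y=b and s=Rgt and c="- \<phi> b" and u="[]" and v="[]"] SB S0 by (simp add: VW LD)

  have pBAX: "pi_chi_omega [Bc,Ac,Xl] = {{0},{1},{2}}"
  proof -
    have "pi_chi_omega [Bc,Ac,Xl] = {{1},{2},{0}}"
      by (rule pi_alt3) (simp_all add: chi_order_def upt_rec LD)
    then show ?thesis by auto
  qed
  have pBX: "pi_chi_omega [Bc,Xl] = {{0},{1}}"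
  proof -
    have "pi_chi_omega [Bc,Xl] = {{1},{0}}"
      by (rule pi_alt2) (simp_all add: chi_order_def upt_rec LD)
    then show ?thesis by auto
  qed
  have pAX: "pi_chi_omega [Ac,Xl] = {{0},{1}}"
  proof -
    have "pi_chi_omega [Ac,Xl] = {{0},{1}}"
      by (rule pi_alt2) (simp_all add: chi_order_def upt_rec LD)
    then show ?thesis by auto
  qed
  have pXA: "pi_chi_omega [Xl,Ac] = {{0},{1}}"
  proof -
    have "pi_chi_omega [Xl,Ac] = {{0},{1}}"
      by (rule pi_alt2) (simp_all add: chi_order_def upt_rec LD)
    then show ?thesis by auto
  qed
  have pXB: "pi_chi_omega [Xl,Bc] = {{0},{1}}"
  proof -
    have "pi_chi_omega [Xl,Bc] = {{0},{1}}"
      by (rule pi_alt2) (simp_all add: chi_order_def upt_rec LD)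
    then show ?thesis by auto
  qed
  have Z1: "\<Phi> [Bc,Ac,Xl] = 0"
  proof -
    have "\<Phi> [Bc,Ac,Xl] = (\<Prod>V\<in>pi_chi_omega [Bc,Ac,Xl]. \<Phi> (nths [Bc,Ac,Xl] V))"
      by (rule cond) (simp add: VW LD, simp, simp add: pBAX nths_Cons SX SAc SBc)
    then show ?thesis by (simp add: pBAX nths_Cons FAc)
  qed
  have Z2: "\<Phi> [Bc,Xl] = 0"
  proof -
    have "\<Phi> [Bc,Xl] = (\<Prod>V\<in>pi_chi_omega [Bc,Xl]. \<Phi> (nths [Bc,Xl] V))"
      by (rule cond) (simp add: VW LD, simp, simp add: pBX nths_Cons SX SAc SBc)
    then show ?thesis by (simp add: pBX nths_Cons FBc)
  qed
  have Z3: "\<Phi> [Ac,Xl] = 0"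
  proof -
    have "\<Phi> [Ac,Xl] = (\<Prod>V\<in>pi_chi_omega [Ac,Xl]. \<Phi> (nths [Ac,Xl] V))"
      by (rule cond) (simp add: VW LD, simp, simp add: pAX nths_Cons SX SAc SBc)
    then show ?thesis by (simp add: pAX nths_Cons FAc)
  qed
  have Z4: "\<Phi> [Xl,Ac] = 0"
  proof -
    have "\<Phi> [Xl,Ac] = (\<Prod>V\<in>pi_chi_omega [Xl,Ac]. \<Phi> (nths [Xl,Ac] V))"
      by (rule cond) (simp add: VW LD, simp, simp add: pXA nths_Cons SX SAc SBc)
    then show ?thesis by (simp add: pXA nths_Cons FAc)
  qed
  have Z5: "\<Phi> [Xl,Bc] = 0"
  proof -
    have "\<Phi> [Xl,Bc] = (\<Prod>V\<in>pi_chi_omega [Xl,Bc]. \<Phi> (nths [Xl,Bc] V))"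
      by (rule cond) (simp add: VW LD, simp, simp add: pXB nths_Cons SX SAc SBc)
    then show ?thesis by (simp add: pXB nths_Cons FBc)
  qed
  have E1: "\<Phi> [Bc,Ac,Xl] = \<Phi> [Bl,Ac,Xl] - \<phi> b * \<Phi> [Ac,Xl]"
    using splitF[where k=2 and y=b and s=Rgt and c="- \<phi> b" and u="[]" and v="[Ac,Xl]"] by (simp add: VW LD)
  have E2: "\<Phi> [Bl,Ac,Xl] = \<Phi> [Bl,Al,Xl] - \<phi> a * \<Phi> [Bl,Xl]"
    using splitF[where k=2 and y=a and s=Lft and c="- \<phi> a" and u="[Bl]" and v="[Xl]"] by (simp add: VW LD)
  have E3: "\<Phi> [Ac,Xl] = \<Phi> [Al,Xl] - \<phi> a * \<Phi> [Xl]"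
    using splitF[where k=2 and y=a and s=Lft and c="- \<phi> a" and u="[]" and v="[Xl]"] by (simp add: VW LD)
  have E4: "\<Phi> [Bc,Xl] = \<Phi> [Bl,Xl] - \<phi> b * \<Phi> [Xl]"
    using splitF[where k=2 and y=b and s=Rgt and c="- \<phi> b" and u="[]" and v="[Xl]"] by (simp add: VW LD)
  have E5: "\<Phi> [Xl,Ac] = \<Phi> [Xl,Al] - \<phi> a * \<Phi> [Xl]"
    using splitF[where k=2 and y=a and s=Lft and c="- \<phi> a" and u="[Xl]" and v="[]"] by (simp add: VW LD)
  have E6: "\<Phi> [Xl,Bc] = \<Phi> [Xl,Bl] - \<phi> b * \<Phi> [Xl]"
    using splitF[where k=2 and y=b and s=Rgt and c="- \<phi> b" and u="[Xl]" and v="[]"] by (simp add: VW LD)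
  have BX: "\<Phi> [Bl,Xl] = \<phi> b * \<phi> x" using E4 Z2 FX by simp
  have AX: "\<Phi> [Al,Xl] = \<phi> a * \<phi> x" using E3 Z3 FX by simp
  have XA: "\<Phi> [Xl,Al] = \<phi> x * \<phi> a" using E5 Z4 FX by (simp add: mult.commute)
  have XB: "\<Phi> [Xl,Bl] = \<phi> x * \<phi> b" using E6 Z5 FX by (simp add: mult.commute)
  have BAX: "\<Phi> [Bl,Al,Xl] = \<phi> b * \<phi> a * \<phi> x"
    using E1 E2 Z1 Z3 BX by (simp add: algebra_simps)
  have P2: "\<phi> (b * (a * x)) = \<phi> b * \<phi> a * \<phi> x"
    using R[of "[Bl,Al,Xl]"] BAX by (simp add: VW LD)
  define t where "t = \<phi> (a * b) - \<phi> a * \<phi> b"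
  define c where "c = - \<phi> a - t"
  define d where "d = 1 - \<phi> b"
  define Ac2 where "Ac2 = (2::nat, Lft, c, a)"
  define Bd where "Bd = (2::nat, Rgt, d, b)"
  have FAB: "\<Phi> [Al,Bl] = \<phi> (a * b)" using R[of "[Al,Bl]"] by (simp add: VW LD)
  have SAB: "\<Psi> [Al,Bl] = \<phi> (a * b)" using S2[of "[Al,Bl]"] by (simp add: VW LD)
  have G1: "\<Phi> [Ac2,Bd] = \<Phi> [Al,Bd] + c * \<Phi> [Bd]"
    using splitF[where k=2 and y=a and s=Lft and c=c and u="[]" and v="[Bd]"] by (simp add: VW LD Ac2_def Bd_def)
  have G2: "\<Phi> [Al,Bd] = \<Phi> [Al,Bl] + d * \<Phi> [Al]"
    using splitF[where k=2 and y=b and s=Rgt and c=d and u="[Al]" and v="[]"] by (simp add: VW LD Ac2_def Bd_def)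
  have G3: "\<Phi> [Bd] = \<Phi> [Bl] + d * \<Phi> []"
    using splitF[where k=2 and y=b and s=Rgt and c=d and u="[]" and v="[]"] by (simp add: VW LD Ac2_def Bd_def)
  have H1: "\<Psi> [Ac2,Bd] = \<Psi> [Al,Bd] + c * \<Psi> [Bd]"
    using splitS[where k=2 and y=a and s=Lft and c=c and u="[]" and v="[Bd]"] by (simp add: VW LD Ac2_def Bd_def)
  have H2: "\<Psi> [Al,Bd] = \<Psi> [Al,Bl] + d * \<Psi> [Al]"
    using splitS[where k=2 and y=b and s=Rgt and c=d and u="[Al]" and v="[]"] by (simp add: VW LD Ac2_def Bd_def)
  have H3: "\<Psi> [Bd] = \<Psi> [Bl] + d * \<Psi> []"
    using splitS[where k=2 and y=b and s=Rgt and c=d and u="[]" and v="[]"] by (simp add: VW LD Ac2_def Bd_def)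
  have Zc: "\<phi> (a * b) + d * \<phi> a + c * (\<phi> b + d) = 0"
    by (simp add: c_def d_def t_def algebra_simps)
  have FAB2: "\<Phi> [Ac2,Bd] = 0" using G1 G2 G3 FAB FA FB F0 Zc by simp
  have SAB2: "\<Psi> [Ac2,Bd] = 0" using H1 H2 H3 SAB SA SB S0 Zc by simp
  have pXAB: "pi_chi_omega [Xl,Ac2,Bd] = {{0},{1,2}}"
    by (rule pi3b) (simp_all add: LD Ac2_def Bd_def)
  have Z6: "\<Phi> [Xl,Ac2,Bd] = 0"
  proof -
    have "\<Phi> [Xl,Ac2,Bd] = (\<Prod>V\<in>pi_chi_omega [Xl,Ac2,Bd]. \<Phi> (nths [Xl,Ac2,Bd] V))"
      by (rule cond) (simp add: VW LD Ac2_def Bd_def, simp, simp add: pXAB nths_Cons SX SAB2)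
    then show ?thesis by (simp add: pXAB nths_Cons FAB2)
  qed
  have K1: "\<Phi> [Xl,Ac2,Bd] = \<Phi> [Xl,Al,Bd] + c * \<Phi> [Xl,Bd]"
    using splitF[where k=2 and y=a and s=Lft and c=c and u="[Xl]" and v="[Bd]"] by (simp add: VW LD Ac2_def Bd_def)
  have K2: "\<Phi> [Xl,Al,Bd] = \<Phi> [Xl,Al,Bl] + d * \<Phi> [Xl,Al]"
    using splitF[where k=2 and y=b and s=Rgt and c=d and u="[Xl,Al]" and v="[]"] by (simp add: VW LD Ac2_def Bd_def)
  have K3: "\<Phi> [Xl,Bd] = \<Phi> [Xl,Bl] + d * \<Phi> [Xl]"
    using splitF[where k=2 and y=b and s=Rgt and c=d and u="[Xl]" and v="[]"] by (simp add: VW LD Ac2_def Bd_def)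
  have XAB: "\<Phi> [Xl,Al,Bl] = \<phi> (x * (a * b))"
    using R[of "[Xl,Al,Bl]"] by (simp add: VW LD)
  have h: "\<phi> (x * (a * b)) + (c * (\<phi> b * \<phi> x) + d * (\<phi> a * \<phi> x)) + c * (d * \<phi> x) = 0"
    using K1 K2 K3 Z6 XAB XA XB FX by (simp add: algebra_simps)
  have "\<phi> (x * (a * b)) - \<phi> x * \<phi> (a * b) = (\<phi> (x * (a * b)) + (c * (\<phi> b * \<phi> x) + d * (\<phi> a * \<phi> x)) + c * (d * \<phi> x))
      - \<phi> x * (\<phi> (a * b) + d * \<phi> a + c * (\<phi> b + d))" by (simp add: algebra_simps)
  then have "\<phi> (x * (a * b)) - \<phi> x * \<phi> (a * b) = 0" using h Zc by simp
  then have P1: "\<phi> (x * (a * b)) = \<phi> x * \<phi> (a * b)" by simp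
  show ?thesis using P1 P2 by simp
qed

lemma herm:
  assumes sa: "star_algebra sc st" and stt: "is_state sc st \<phi>"
  shows "\<phi> (st z) = cnj (\<phi> z)"
proof -
  have add: "\<And>x y. \<phi> (x + y) = \<phi> x + \<phi> y" using stt unfolding is_state_def by blast
  have smul: "\<And>c x. \<phi> (sc c x) = c * \<phi> x" using stt unfolding is_state_def by blast
  have one: "\<phi> 1 = 1" using stt unfolding is_state_def by blast
  have pos: "\<And>x. Im (\<phi> (st x * x)) = 0" using stt unfolding is_state_def by blast
  have stadd: "\<And>x y. st (x + y) = st x + st y" using sa unfolding star_algebra_def by blast
  have stsc: "\<And>a x. st (sc a x) = sc (cnj a) (st x)" using sa unfolding star_algebra_def by blast
  have stmul: "\<And>x y. st (x * y) = st y * st x" using sa unfolding star_algebra_def by blast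
  have stst: "\<And>x. st (st x) = x" using sa unfolding star_algebra_def by blast
  have scsc: "\<And>a b x. sc a (sc b x) = sc (a * b) x" using sa unfolding star_algebra_def by blast
  have sc1: "\<And>x. sc 1 x = x" using sa unfolding star_algebra_def by blast
  have scm: "\<And>a x y. sc a (x * y) = sc a x * y \<and> sc a (x * y) = x * sc a y" using sa unfolding star_algebra_def by blast
  have st1: "st 1 = 1"
  proof -
    have "st (st 1 * 1) = st 1 * st (st 1)" by (rule stmul)
    then show ?thesis using stst by simp
  qed
  have i1: "Im (\<phi> z) + Im (\<phi> (st z)) = 0"
  proof -
    have "st (1 + z) * (1 + z) = 1 + z + st z + st z * z"
      by (simp add: stadd st1 algebra_simps)
    then have "\<phi> (st (1 + z) * (1 + z)) = 1 + \<phi> z + \<phi> (st z) + \<phi> (st z * z)"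
      by (simp add: add one)
    then show ?thesis using pos[of "1 + z"] pos[of z] by simp
  qed
  have i2: "Re (\<phi> z) - Re (\<phi> (st z)) = 0"
  proof -
    have e: "sc (- \<i>) (st z) * sc \<i> z = st z * z"
    proof -
      have "sc (- \<i>) (st z) * sc \<i> z = sc (- \<i>) (st z * sc \<i> z)" using scm by metis
      also have "st z * sc \<i> z = sc \<i> (st z * z)" using scm by metis
      also have "sc (- \<i>) (sc \<i> (st z * z)) = st z * z" using scsc sc1 by simp
      finally show ?thesis .
    qed
    have "st (1 + sc \<i> z) * (1 + sc \<i> z) = 1 + sc \<i> z + sc (- \<i>) (st z) + sc (- \<i>) (st z) * sc \<i> z"
      by (simp add: stadd st1 stsc algebra_simps)
    then have "st (1 + sc \<i> z) * (1 + sc \<i> z) = 1 + sc \<i> z + sc (- \<i>) (st z) + st z * z"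
      using e by simp
    then have "\<phi> (st (1 + sc \<i> z) * (1 + sc \<i> z)) = 1 + \<i> * \<phi> z - \<i> * \<phi> (st z) + \<phi> (st z * z)"
      by (simp add: add one smul)
    then show ?thesis using pos[of "1 + sc \<i> z"] pos[of z] by simp
  qed
  show ?thesis using i1 i2 by (simp add: complex_eq_iff)
qed

theorem mainTheorem5:
  fixes sc :: "complex \<Rightarrow> 'a::ring_1 \<Rightarrow> 'a"
    and st :: "'a \<Rightarrow> 'a"
    and \<phi> :: "'a \<Rightarrow> complex"
    and A :: "nat \<Rightarrow> side \<Rightarrow> 'a set"
  assumes "star_algebra sc st"
    and "is_state sc st \<phi>"
    and "\<And>k s. k \<in> {1, 2} \<Longrightarrow> star_subalgebra sc st (A k s)"
    and "bimonotone_independent sc \<phi> A"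
    and "\<exists>x\<in>A 1 Lft. \<phi> x \<noteq> 0"
  shows "\<forall>a\<in>A 2 Lft. \<forall>b\<in>A 2 Rgt. \<phi> (a * b) = \<phi> a * \<phi> b \<and> \<phi> (b * a) = \<phi> a * \<phi> b"
proof -
  obtain \<Phi> \<Psi> where pair: "bimonotone_cbifree_pair sc \<phi> A \<Phi> \<Psi>"
    and restr: "\<forall>w. valid_word A w \<and> pure_word w \<and> w \<noteq> [] \<longrightarrow> \<phi> (word_prod w) = \<Phi> w"
    using assms(4) unfolding bimonotone_independent_def by blast
  have scadd: "\<And>c x y. sc c (x + y) = sc c x + sc c y" using assms(1) unfolding star_algebra_def by blast
  have sc0: "\<And>c. sc c 0 = 0"
  proof -
    fix c
    have "sc c (0 + 0) = sc c 0 + sc c 0" by (rule scadd)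
    then show "sc c 0 = 0" by simp
  qed
  have z: "\<And>k s. k \<in> {1,2} \<Longrightarrow> 0 \<in> A k s" using assms(3) unfolding star_subalgebra_def by blast
  have stA: "\<And>k s y. k \<in> {1,2} \<Longrightarrow> y \<in> A k s \<Longrightarrow> st y \<in> A k s"
    using assms(3) unfolding star_subalgebra_def by blast
  have stmul: "\<And>x y. st (x * y) = st y * st x" using assms(1) unfolding star_algebra_def by blast
  have stst: "\<And>x. st (st x) = x" using assms(1) unfolding star_algebra_def by blast
  have H: "\<And>y. \<phi> (st y) = cnj (\<phi> y)" by (rule herm[OF assms(1,2)])
  have zz: "\<forall>k\<in>{1,2}. \<forall>s. 0 \<in> A k s" using z by blast
  note K = key[OF pair restr sc0 zz]
  obtain x0 where x0: "x0 \<in> A 1 Lft" "\<phi> x0 \<noteq> 0" using assms(5) by blast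
  have x1: "st x0 \<in> A 1 Lft" using stA x0 by simp
  have M: "\<And>a b. a \<in> A 2 Lft \<Longrightarrow> b \<in> A 2 Rgt \<Longrightarrow> \<phi> (a * b) = \<phi> a * \<phi> b"
  proof -
    fix a b assume a: "a \<in> A 2 Lft" and b: "b \<in> A 2 Rgt"
    have sa: "st a \<in> A 2 Lft" and sb: "st b \<in> A 2 Rgt" using stA a b by simp_all
    have k1: "\<phi> (st x0 * (a * b)) = \<phi> (st x0) * \<phi> (a * b)" using K[OF a b x1] by blast
    have k2: "\<phi> (st b * (st a * x0)) = \<phi> (st b) * \<phi> (st a) * \<phi> x0" using K[OF sa sb x0(1)] by blast
    have "st (st x0 * (a * b)) = st b * (st a * x0)" by (simp add: stmul stst mult.assoc)
    then have "\<phi> (st b * (st a * x0)) = cnj (\<phi> (st x0 * (a * b)))" using H by metis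
    then have "cnj (\<phi> b) * cnj (\<phi> a) * \<phi> x0 = \<phi> x0 * cnj (\<phi> (a * b))"
      using k1 k2 H by simp
    then have "\<phi> x0 * cnj (\<phi> (a * b)) = \<phi> x0 * cnj (\<phi> a * \<phi> b)" by (simp only: complex_cnj_mult mult_ac)
    then have "cnj (\<phi> (a * b)) = cnj (\<phi> a * \<phi> b)" using x0(2) by simp
    then have "cnj (cnj (\<phi> (a * b))) = cnj (cnj (\<phi> a * \<phi> b))" by (rule arg_cong)
    then show "\<phi> (a * b) = \<phi> a * \<phi> b" by (simp only: complex_cnj_cnj)
  qed
  show ?thesis
  proof (intro ballI conjI)
    fix a b assume a: "a \<in> A 2 Lft" and b: "b \<in> A 2 Rgt"
    show "\<phi> (a * b) = \<phi> a * \<phi> b" using M a b by blast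
    have sa: "st a \<in> A 2 Lft" and sb: "st b \<in> A 2 Rgt" using stA a b by simp_all
    have "\<phi> (b * a) = cnj (\<phi> (st (b * a)))" using H stst by simp
    also have "st (b * a) = st a * st b" by (rule stmul)
    also have "\<phi> (st a * st b) = \<phi> (st a) * \<phi> (st b)" using M sa sb by blast
    finally show "\<phi> (b * a) = \<phi> a * \<phi> b" using H by simp
  qed
qed

end
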